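(* Let $d\ge2$ and let $N_1,\dots,N_d,s$ be positive integers with $\min_{1\le i\le d}N_i>s\ge2$. Let $X\subseteq[N_1]\times\cdots\times[N_d]$, $\lambda_0\in(0,\frac1{s-1})$, and let $B\subseteq[-\frac{N_1}{s-1},\frac{N_1}{s-1}]\times\cdots\times[-\frac{N_d}{s-1},\frac{N_d}{s-1}]$ be a set of nonzero integer points such that every $(b_1,\dots,b_d)\in B$ satisfies $\lambda_0\le\max_{1\le i\le d}\frac{|b_i|}{\gcd(b_1,\dots,b_d)N_i}$. Let $\mathbf{b}\in B$, let $f_{\mathbf{b}}:\mathbb{Z}^d\to\mathbb{Z}^{d-1}$ be a map of the form $f_{\mathbf{b}}(\mathbf{x})=M\mathbf{x}+\mathbf{v}$ ($M\in\mathbb{Z}^{(d-1)\times d}$, $\mathbf{v}\in\mathbb{Z}^{d-1}$) such that for all $\mathbf{x}_1,\mathbf{x}_2\in\mathbb{Z}^d$, $f_{\mathbf{b}}(\mathbf{x}_1)=f_{\mathbf{b}}(\mathbf{x}_2)$ iff $\mathbf{x}_1-\mathbf{x}_2=k\mathbf{b}$ for some $k\in\mathbb{Q}$, and let $s^*\le s$ be a positive integer. Then \[ \sum_{\mathbf{b}'\in B}|U^d(X,\mathbf{b},s)\cap U^d(X,\mathbf{b}',s)|\le\frac{4}{s\lambda_0}|U^d(X,\mathbf{b},s)|+\frac{s^*-1}{s}\sum_{\mathbf{b}'\in B}|U^d(X,\mathbf{b}',s)|+\frac{12}{s\lambda_0^2}\sum_{\mathbf{b}^*\in\mathbb{Z}^{d-1}\setminus\{\mathbf{0}\}}|U^{d-1}(f_{\mathbf{b}}(U^d(X,\mathbf{b},s)),\mathbf{b}^*,s^*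 )|. \]
   Context: $[N]=\{1,\dots,N\}$. For $n\ge1$, a finite set $Y\subseteq\mathbb{Z}^n$, $\mathbf{c}\in\mathbb{Z}^n\setminus\{\mathbf{0}\}$ and a positive integer $r$: points $\mathbf{y},\mathbf{y}'$ are congruent mod $\mathbf{c}$ if $\mathbf{y}-\mathbf{y}'\in\mathbb{Z}\mathbf{c}$, and $U^n(Y,\mathbf{c},r)$ is the set of $\mathbf{y}\in Y$ with $|\{\mathbf{y}'\in Y:\mathbf{y}'\equiv\mathbf{y}\pmod{\mathbf{c}}\}|\ge r$. *)

theory Defs
  imports "HOL-Analysis.Analysis"
begin

text \<open>Integer vectors in Z^n are represented as int lists of length n.\<close>

definition intvecs :: "nat \<Rightarrow> int list set" where
  "intvecs n = {x. length x = n}"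

definition congr_mod :: "int list \<Rightarrow> int list \<Rightarrow> int list \<Rightarrow> bool" where
  "congr_mod c y y' \<longleftrightarrow> length y = length c \<and> length y' = length c \<and>
     (\<exists>k::int. \<forall>i<length c. y ! i - y' ! i = k * c ! i)"

text \<open>U^n(Y,c,r); the dimension n is implicit in the length of the vectors.\<close>
definition U :: "int list set \<Rightarrow> int list \<Rightarrow> nat \<Rightarrow> int list set" where
  "U Y c r = {y \<in> Y. r \<le> card {y' \<in> Y. congr_mod c y' y}}"

definition affmap :: "nat \<Rightarrow> (nat \<Rightarrow> nat \<Rightarrow> int) \<Rightarrow> (nat \<Rightarrow> int) \<Rightarrow> int list \<Rightarrow> int list" where
  "affmap d M v x = map (\<lambda>j. (\<Sum>i<d. M j i * x ! i) + v j) [0..<d - 1]"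

end

theory Submission
  imports Defs
begin

lemma gcd_list_int:
  fixes k :: rat
  shows "(\<forall>j<length c. k * of_int (c ! j) \<in> \<int>) \<Longrightarrow> k * of_int (Gcd (set c)) \<in> \<int>"
proof (induction c)
  case Nil then show ?case by simp
next
  case (Cons x xs)
  have hx: "k * of_int x \<in> \<int>" using Cons.prems by (metis length_Cons nth_Cons_0 zero_less_Suc)
  have "\<forall>j<length xs. k * of_int (xs ! j) \<in> \<int>" using Cons.prems by auto
  then have hy: "k * of_int (Gcd (set xs)) \<in> \<int>" using Cons.IH by blast
  obtain u w where uw: "u * x + w * Gcd (set xs) = gcd x (Gcd (set xs))" using bezout_int by blast
  have "k * of_int (Gcd (set (x # xs))) = of_int u * (k * of_int x) + of_int w * (k * of_int (Gcd (set xs)))"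
    using uw[symmetric] by (simp add: algebra_simps)
  also have "\<dots> \<in> \<int>" by (intro Ints_add Ints_mult Ints_of_int hx hy)
  finally show ?case .
qed

lemma cardA:
  fixes S :: "int set" and a :: int and lo hi :: real
  assumes fin: "finite S" and a: "a > 0" and dv: "\<forall>x\<in>S. \<forall>y\<in>S. a dvd (x - y)"
    and bd: "\<forall>x\<in>S. lo \<le> real_of_int x \<and> real_of_int x \<le> hi" and lh: "lo \<le> hi"
  shows "real (card S) \<le> (hi - lo) / a + 1"
proof (cases "S = {}")
  case True then show ?thesis using lh a by simp
next
  case False
  define m where "m = Min S"
  have mS: "m \<in> S" using fin False m_def by simp
  have mle: "\<And>x. x \<in> S \<Longrightarrow> m \<le> x" using fin m_def by simp
  define F where "F = \<lfloor>(hi - lo) / a\<rfloor>"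
  define g where "g x = (x - m) div a" for x
  have inj: "inj_on g S"
  proof (rule inj_onI)
    fix x y assume "x \<in> S" "y \<in> S" "g x = g y"
    then have "a dvd (x - m)" "a dvd (y - m)" using dv mS by auto
    then show "x = y" using \<open>g x = g y\<close> unfolding g_def
      by (metis dvd_div_mult_self add.commute diff_add_cancel)
  qed
  have sub: "g ` S \<subseteq> {0..F}"
  proof
    fix z assume "z \<in> g ` S"
    then obtain x where x: "x \<in> S" "z = g x" by auto
    have "a dvd (x - m)" using dv mS x by auto
    then have e: "x - m = a * z" using x unfolding g_def by simp
    have "m \<le> x" using mle x by simp
    then have "0 \<le> a * z" using e by simp
    then have "0 \<le> z" using a by (simp add: zero_le_mult_iff)
    moreover have "real_of_int (x - m) \<le> hi - lo"
    proof -
      have "real_of_int x \<le> hi" "lo \<le> real_of_int m" using bd x(1) mS by auto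
      then show ?thesis by simp
    qed
    then have "real_of_int a * real_of_int z \<le> hi - lo" using e by (metis of_int_mult)
    then have "real_of_int z \<le> (hi - lo) / a" using a by (simp add: field_simps mult.commute)
    then have "z \<le> F" unfolding F_def by (simp add: le_floor_iff)
    ultimately show "z \<in> {0..F}" by simp
  qed
  have "card S = card (g ` S)" using inj by (simp add: card_image)
  also have "\<dots> \<le> card {0..F}" using sub by (intro card_mono) auto
  also have "\<dots> = nat (F + 1)" by simp
  finally have "real (card S) \<le> real (nat (F + 1))" by simp
  also have "\<dots> \<le> (hi - lo) / a + 1" unfolding F_def using lh a by (simp add: of_nat_nat)
  finally show ?thesis .
qed

lemma congr_refl: "length y = length c \<Longrightarrow> congr_mod c y y"
  unfolding congr_mod_def by (rule conjI, simp, rule conjI, simp, rule exI[of _ 0]) simp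

lemma congr_sym: "congr_mod c y y' \<Longrightarrow> congr_mod c y' y"
  unfolding congr_mod_def
proof (elim conjE exE)
  fix k assume h: "length y = length c" "length y' = length c" "\<forall>i<length c. y ! i - y' ! i = k * c ! i"
  show "length y' = length c \<and> length y = length c \<and> (\<exists>k. \<forall>i<length c. y' ! i - y ! i = k * c ! i)"
    using h by (intro conjI exI[of _ "-k"]) (auto simp: algebra_simps)
qed

lemma congr_trans: "congr_mod c x y \<Longrightarrow> congr_mod c y z \<Longrightarrow> congr_mod c x z"
  unfolding congr_mod_def
proof (elim conjE exE)
  fix k1 k2 assume h: "length x = length c" "length y = length c" "\<forall>i<length c. x ! i - y ! i = k1 * c ! i"
    "length z = length c" "\<forall>i<length c. y ! i - z ! i = k2 * c ! i"
  show "length x = length c \<and> length z = length c \<and> (\<exists>k. \<forall>i<length c. x ! i - z ! i = k * c ! i)"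
  proof (intro conjI exI[of _ "k1 + k2"] allI impI)
    fix i assume "i < length c"
    then have "x ! i - y ! i = k1 * c ! i" "y ! i - z ! i = k2 * c ! i" using h by auto
    then show "x ! i - z ! i = (k1 + k2) * c ! i" by (simp add: algebra_simps)
  qed (use h in auto)
qed

lemma F4gen:
  fixes f :: "int list \<Rightarrow> int list" and K :: real and s s' :: nat
  assumes finX: "finite X" and XL: "\<forall>x\<in>X. length x = length b'"
    and UbX: "Ub \<subseteq> X"
    and fcong: "\<forall>y1\<in>X. \<forall>y2\<in>X. congr_mod b' y1 y2 \<longrightarrow> congr_mod c (f y1) (f y2)"
    and finj: "\<forall>y1\<in>X. \<forall>y2\<in>X. congr_mod b' y1 y2 \<and> f y1 = f y2 \<longrightarrow> y1 = y2"
    and fib: "\<forall>z. real (card {y\<in>Ub. f y = z}) \<le> K"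
    and hs: "1 \<le> s" and hs': "1 \<le> s'"
  shows "real (card (Ub \<inter> U X b' s)) \<le> (real s' - 1) / real s * real (card (U X b' s))
           + K * real (card (U (f ` Ub) c s'))"
proof -
  define A where "A = Ub \<inter> U X b' s"
  define Z where "Z = U (f ` Ub) c s'"
  define A1 where "A1 = {y\<in>A. f y \<in> Z}"
  define A2 where "A2 = A - A1"
  define C where "C y = {y'\<in>X. congr_mod b' y' y}" for y
  have finUb: "finite Ub" using finX UbX finite_subset by blast
  have finA: "finite A" unfolding A_def using finUb by simp
  have finZ: "finite Z" unfolding Z_def U_def using finUb by simp
  have A2X: "A2 \<subseteq> X" unfolding A2_def A_def using UbX by auto
  have finA2: "finite A2" using A2X finX finite_subset by blast
  have finC: "finite (C y)" for y unfolding C_def using finX by simp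
  have cardA: "card A = card A1 + card A2"
    unfolding A2_def using finA card_Diff_subset[of A1 A] card_mono[of A A1]
    by (metis A1_def le_add_diff_inverse mem_Collect_eq subsetI finite_subset)
  have K0: "0 \<le> K" using fib by (meson of_nat_0_le_iff order_trans)
  have "A1 \<subseteq> (\<Union>z\<in>Z. {y\<in>Ub. f y = z})" unfolding A1_def A_def by auto
  then have "card A1 \<le> card (\<Union>z\<in>Z. {y\<in>Ub. f y = z})"
    using finUb finZ by (intro card_mono) auto
  also have "\<dots> \<le> (\<Sum>z\<in>Z. card {y\<in>Ub. f y = z})" using finZ by (rule card_UN_le)
  finally have "real (card A1) \<le> (\<Sum>z\<in>Z. real (card {y\<in>Ub. f y = z}))"
    by (metis of_nat_le_iff of_nat_sum)
  also have "\<dots> \<le> (\<Sum>z\<in>Z. K)" using fib by (intro sum_mono) auto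
  finally have A1b: "real (card A1) \<le> K * real (card Z)" by (simp add: mult.commute)
  have Ceq: "C y = C y0" if "y \<in> X" "y0 \<in> X" "congr_mod b' y0 y" for y y0
    unfolding C_def using that congr_sym congr_trans by blast
  have cl1: "card (C y \<inter> Ub) \<le> s' - 1" if "y \<in> A2" for y
  proof (rule ccontr)
    assume "\<not> ?thesis"
    then have ge: "s' \<le> card (C y \<inter> Ub)" by simp
    have yX: "y \<in> X" "y \<in> Ub" using that A2X unfolding A2_def A_def by auto
    have "inj_on f (C y \<inter> Ub)"
    proof (rule inj_onI)
      fix y1 y2 assume "y1 \<in> C y \<inter> Ub" "y2 \<in> C y \<inter> Ub" "f y1 = f y2"
      then show "y1 = y2" using finj unfolding C_def
        by (metis (no_types, lifting) IntD1 congr_sym congr_trans mem_Collect_eq)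
    qed
    then have "card (f ` (C y \<inter> Ub)) = card (C y \<inter> Ub)" by (rule card_image)
    moreover have "f ` (C y \<inter> Ub) \<subseteq> {z \<in> f ` Ub. congr_mod c z (f y)}"
      using fcong yX unfolding C_def by auto
    moreover have "finite {z \<in> f ` Ub. congr_mod c z (f y)}" using finUb by simp
    ultimately have "s' \<le> card {z \<in> f ` Ub. congr_mod c z (f y)}"
      using ge card_mono by (metis (no_types, lifting) le_trans)
    then have "f y \<in> Z" unfolding Z_def U_def using yX by auto
    then show False using that unfolding A2_def A1_def A_def using yX by auto
  qed
  define h where "h y y' = (if congr_mod b' y' y then 1 / real (card (C y)) else 0)" for y y'
  have inner1: "(\<Sum>y\<in>X. h y y') = 1" if "y' \<in> A2" for y'
  proof -
    have y'X: "y' \<in> X" and y'U: "y' \<in> U X b' s" using that A2X unfolding A2_def A_def by auto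
    have cpos: "s \<le> card (C y')" using y'U unfolding U_def C_def by auto
    have "(\<Sum>y\<in>X. h y y') = (\<Sum>y\<in>C y'. 1 / real (card (C y')))"
    proof -
      have "(\<Sum>y\<in>X. h y y') = (\<Sum>y\<in>X. if y \<in> C y' then 1 / real (card (C y')) else 0)"
      proof (rule sum.cong)
        fix y assume yX: "y \<in> X"
        show "h y y' = (if y \<in> C y' then 1 / real (card (C y')) else 0)"
        proof (cases "congr_mod b' y' y")
          case True
          then show ?thesis unfolding h_def using Ceq[OF yX y'X] yX congr_sym
            unfolding C_def by auto
        next
          case False
          then show ?thesis unfolding h_def C_def using congr_sym by auto
        qed
      qed simp
      also have "\<dots> = (\<Sum>y\<in>C y'. 1 / real (card (C y')))"
        using finX by (simp add: sum.If_cases C_def Int_def)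
      finally show ?thesis .
    qed
    also have "\<dots> = 1" using cpos hs by simp
    finally show ?thesis .
  qed
  have "real (card A2) = (\<Sum>y'\<in>A2. \<Sum>y\<in>X. h y y')" using inner1 by simp
  also have "\<dots> = (\<Sum>y\<in>X. \<Sum>y'\<in>A2. h y y')" by (rule sum.swap)
  also have "\<dots> \<le> (\<Sum>y\<in>X. if y \<in> U X b' s then (real s' - 1) / real s else 0)"
  proof (rule sum_mono)
    fix y assume yX: "y \<in> X"
    show "(\<Sum>y'\<in>A2. h y y') \<le> (if y \<in> U X b' s then (real s' - 1) / real s else 0)"
    proof (cases "\<exists>y0\<in>A2. congr_mod b' y0 y")
      case False
      then have "(\<Sum>y'\<in>A2. h y y') = 0" unfolding h_def by (intro sum.neutral) auto
      then show ?thesis using hs' by simp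
    next
      case True
      then obtain y0 where y0: "y0 \<in> A2" "congr_mod b' y0 y" by blast
      have y0X: "y0 \<in> X" "y0 \<in> U X b' s" using y0 A2X unfolding A2_def A_def by auto
      have CC: "C y = C y0" using Ceq[OF yX y0X(1) y0(2)] .
      have cs: "s \<le> card (C y)" using y0X CC unfolding U_def C_def by auto
      then have yU: "y \<in> U X b' s" using yX unfolding U_def C_def by auto
      have seq: "{y'\<in>A2. congr_mod b' y' y} = C y \<inter> A2" unfolding C_def using A2X by blast
      have "(\<Sum>y'\<in>A2. h y y') = (\<Sum>y'\<in>{y'\<in>A2. congr_mod b' y' y}. 1 / real (card (C y)))"
        unfolding h_def using finA2 by (simp only: sum.inter_filter)
      also have "\<dots> = (\<Sum>y'\<in>C y \<inter> A2. 1 / real (card (C y)))" by (simp only: seq)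
      also have "\<dots> = real (card (C y \<inter> A2)) / real (card (C y))" by simp
      also have "\<dots> \<le> (real s' - 1) / real s"
      proof -
        have "card (C y \<inter> A2) \<le> card (C y0 \<inter> Ub)"
          using CC finC unfolding A2_def A_def by (intro card_mono) auto
        also have "\<dots> \<le> s' - 1" using cl1[OF y0(1)] .
        finally have "real (card (C y \<inter> A2)) \<le> real s' - 1" using hs' by linarith
        moreover have "real s \<le> real (card (C y))" using cs by simp
        moreover have "0 \<le> real s' - 1" using hs' by simp
        ultimately have "real (card (C y \<inter> A2)) / real (card (C y)) \<le> (real s' - 1) / real (card (C y))"
          "(real s' - 1) / real (card (C y)) \<le> (real s' - 1) / real s"
          using hs by (auto intro!: divide_right_mono divide_left_mono)
        then show ?thesis by linarith
      qed
      finally show ?thesis using yU by simp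
    qed
  qed
  also have "\<dots> = (real s' - 1) / real s * real (card (U X b' s))"
  proof -
    have "U X b' s \<subseteq> X" unfolding U_def by auto
    then show ?thesis using finX by (simp add: sum.If_cases Int_absorb1 Int_commute)
  qed
  finally have A2b: "real (card A2) \<le> (real s' - 1) / real s * real (card (U X b' s))" .
  show ?thesis using cardA A1b A2b unfolding A_def Z_def by simp
qed

definition linpart :: "nat \<Rightarrow> (nat \<Rightarrow> nat \<Rightarrow> int) \<Rightarrow> int list \<Rightarrow> int list" where
  "linpart d M x = map (\<lambda>j. \<Sum>i<d. M j i * x ! i) [0..<d - 1]"

lemma aff_eq_iff: "affmap d M v x1 = affmap d M v x2 \<longleftrightarrow> linpart d M x1 = linpart d M x2"
  unfolding affmap_def linpart_def by (simp add: list_eq_iff_nth_eq)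

lemma linpart_zero: "linpart d M (replicate d 0) = replicate (d - 1) 0"
  unfolding linpart_def by (simp add: list_eq_iff_nth_eq)

lemma lin_congr:
  assumes "length y1 = d" "length y2 = d" "length b' = d" "congr_mod b' y1 y2"
  shows "congr_mod (linpart d M b') (affmap d M v y1) (affmap d M v y2)"
proof -
  obtain k where k: "\<forall>i<d. y1 ! i - y2 ! i = k * b' ! i" using assms unfolding congr_mod_def by auto
  have "affmap d M v y1 ! j - affmap d M v y2 ! j = k * linpart d M b' ! j" if "j < d - 1" for j
  proof -
    have "affmap d M v y1 ! j - affmap d M v y2 ! j = (\<Sum>i<d. M j i * (y1 ! i - y2 ! i))"
      using that unfolding affmap_def by (simp add: sum_subtractf algebra_simps)
    also have "\<dots> = (\<Sum>i<d. k * (M j i * b' ! i))" using k by (intro sum.cong) (auto simp: algebra_simps)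
    also have "\<dots> = k * linpart d M b' ! j" using that unfolding linpart_def by (simp add: sum_distrib_left)
    finally show ?thesis .
  qed
  then show ?thesis unfolding congr_mod_def linpart_def affmap_def by auto
qed

lemma keyP:
  fixes b :: "int list"
  assumes hf: "\<forall>x1\<in>intvecs d. \<forall>x2\<in>intvecs d.
               affmap d M v x1 = affmap d M v x2 \<longleftrightarrow>
               (\<exists>k::rat. \<forall>i<d. of_int (x1 ! i - x2 ! i) = k * of_int (b ! i))"
    and lb: "length b = d" and i: "i < d" and bi: "b ! i \<noteq> 0"
    and x: "x1 \<in> intvecs d" "x2 \<in> intvecs d" "affmap d M v x1 = affmap d M v x2"
  shows "(\<bar>b ! i\<bar> div Gcd (set b)) dvd (x1 ! i - x2 ! i) \<and> (x1 ! i = x2 ! i \<longrightarrow> x1 = x2)"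
proof -
  obtain k :: rat where k: "\<forall>j<d. of_int (x1 ! j - x2 ! j) = k * of_int (b ! j)" using hf x by blast
  have "\<forall>j<length b. k * of_int (b ! j) \<in> \<int>" using k lb by (metis Ints_of_int)
  then have "k * of_int (Gcd (set b)) \<in> \<int>" by (rule gcd_list_int)
  then obtain t where t: "k * of_int (Gcd (set b)) = of_int t" by (metis Ints_cases)
  have "Gcd (set b) dvd b ! i" using i lb by (simp add: Gcd_dvd)
  then obtain q where q: "b ! i = Gcd (set b) * q" by blast
  have g0: "Gcd (set b) \<noteq> 0" using q bi by auto
  have "of_int (x1 ! i - x2 ! i) = k * of_int (Gcd (set b)) * (of_int q :: rat)" using k i q by simp
  also have "\<dots> = of_int (t * q)" using t by simp
  finally have e: "x1 ! i - x2 ! i = t * q" by (simp only: of_int_eq_iff)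
  have "\<bar>b ! i\<bar> div Gcd (set b) = \<bar>q\<bar>"
  proof -
    have "Gcd (set b) \<ge> 0" by simp
    then have "\<bar>b ! i\<bar> = Gcd (set b) * \<bar>q\<bar>" using q by (simp add: abs_mult)
    then show ?thesis using g0 by simp
  qed
  then have d1: "(\<bar>b ! i\<bar> div Gcd (set b)) dvd (x1 ! i - x2 ! i)" using e by simp
  have "x1 = x2" if "x1 ! i = x2 ! i"
  proof -
    have "k * of_int (b ! i) = 0" using k i that by (metis diff_self of_int_0)
    then have "k = 0" using bi by simp
    then have "\<forall>j<d. x1 ! j = x2 ! j" using k by simp
    then show ?thesis using x unfolding intvecs_def by (simp add: list_eq_iff_nth_eq)
  qed
  then show ?thesis using d1 by blast
qed

theorem lemma4p9:
  fixes d s s' :: nat and N :: "int list" and X B :: "int list set"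
    and lam0 :: real and b :: "int list"
    and M :: "nat \<Rightarrow> nat \<Rightarrow> int" and v :: "nat \<Rightarrow> int"
  assumes hd: "d \<ge> 2"
    and hN: "length N = d"
    and hs: "s \<ge> 2"
    and hNs: "\<forall>i<d. N ! i > int s"
    and hX: "X \<subseteq> {x \<in> intvecs d. \<forall>i<d. 1 \<le> x ! i \<and> x ! i \<le> N ! i}"
    and hlam: "0 < lam0" "lam0 < 1 / (real s - 1)"
    and hB: "B \<subseteq> {c \<in> intvecs d. c \<noteq> replicate d 0 \<and>
               (\<forall>i<d. \<bar>real_of_int (c ! i)\<bar> \<le> real_of_int (N ! i) / (real s - 1))}"
    and hBlam: "\<forall>c\<in>B. lam0 \<le> Max ((\<lambda>i. \<bar>real_of_int (c ! i)\<bar> /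
                   (real_of_int (Gcd (set c)) * real_of_int (N ! i))) ` {..<d})"
    and hb: "b \<in> B"
    and hf: "\<forall>x1\<in>intvecs d. \<forall>x2\<in>intvecs d.
               affmap d M v x1 = affmap d M v x2 \<longleftrightarrow>
               (\<exists>k::rat. \<forall>i<d. of_int (x1 ! i - x2 ! i) = k * of_int (b ! i))"
    and hs': "1 \<le> s'" "s' \<le> s"
  shows "ennreal (\<Sum>b'\<in>B. real (card (U X b s \<inter> U X b' s)))
    \<le> ennreal (4 / (real s * lam0) * real (card (U X b s)))
      + ennreal ((real s' - 1) / real s * (\<Sum>b'\<in>B. real (card (U X b' s))))
      + ennreal (12 / (real s * lam0 ^ 2)) *
        infsum (\<lambda>c. ennreal (real (card (U (affmap d M v ` U X b s) c s'))))
          {c \<in> intvecs (d - 1). c \<noteq> replicate (d - 1) 0}"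
proof (cases "finite B")
  case False
  then show ?thesis by simp
next
  case finB: True
  define g where "g = Gcd (set b)"
  have bB: "b \<in> intvecs d" "b \<noteq> replicate d 0" using hB hb by auto
  have lb: "length b = d" using bB unfolding intvecs_def by simp
  define F where "F i = \<bar>real_of_int (b ! i)\<bar> / (real_of_int (Gcd (set b)) * real_of_int (N ! i))" for i
  have "0 \<in> {..<d}" using hd by simp
  then have "Max (F ` {..<d}) \<in> F ` {..<d}" by (intro Max_in) auto
  then obtain i where i: "i < d" "Max (F ` {..<d}) = F i" by auto
  have "lam0 \<le> Max (F ` {..<d})" using hBlam hb unfolding F_def by blast
  then have lamF: "lam0 \<le> F i" using i(2) by simp
  have bi: "b ! i \<noteq> 0"
  proof
    assume "b ! i = 0" then have "F i = 0" unfolding F_def by simp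
    then show False using lamF hlam by simp
  qed
  have gdvd: "g dvd b ! i" unfolding g_def using i lb by (simp add: Gcd_dvd)
  have gpos: "g > 0"
  proof -
    have "g \<ge> 0" unfolding g_def by simp
    moreover have "g \<noteq> 0" using gdvd bi by auto
    ultimately show ?thesis by simp
  qed
  define a where "a = \<bar>b ! i\<bar> div g"
  have gdvd': "g dvd \<bar>b ! i\<bar>" using gdvd by simp
  have aeq: "\<bar>b ! i\<bar> = g * a" unfolding a_def using gdvd' by simp
  have apos: "a > 0"
  proof -
    have "0 < g * a" using aeq bi by simp
    then show ?thesis using gpos by (simp add: zero_less_mult_iff)
  qed
  define Ni where "Ni = N ! i"
  have Nis: "Ni > int s" using hNs i Ni_def by simp
  have Nipos: "real_of_int Ni > 0" using Nis by simp
  have areal: "real_of_int a = \<bar>real_of_int (b ! i)\<bar> / real_of_int g"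
    using aeq gpos by (simp add: field_simps) (metis of_int_abs of_int_mult)
  have lamA: "lam0 * real_of_int Ni \<le> real_of_int a"
  proof -
    have "F i = real_of_int a / real_of_int Ni" unfolding F_def Ni_def g_def[symmetric] areal
      by (simp add: field_simps)
    then have "F i * real_of_int Ni = real_of_int a" using Nipos by (simp add: field_simps)
    moreover have "lam0 * real_of_int Ni \<le> F i * real_of_int Ni"
      using lamF Nipos by (intro mult_right_mono) auto
    ultimately show ?thesis by simp
  qed
  have Pkey: "(a dvd (x1 ! i - x2 ! i)) \<and> (x1 ! i = x2 ! i \<longrightarrow> x1 = x2)"
    if "x1 \<in> intvecs d" "x2 \<in> intvecs d" "affmap d M v x1 = affmap d M v x2" for x1 x2
    using keyP[OF hf lb i(1) bi that] unfolding a_def g_def by blast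
  define T where "T = real_of_int Ni / (real s - 1)"
  have s1: "real s - 1 \<ge> 1" using hs by simp
  have T0: "T \<ge> 0" unfolding T_def using Nipos s1 by simp
  define z0 where "z0 = replicate d (0::int)"
  have z0v: "z0 \<in> intvecs d" unfolding z0_def intvecs_def by simp
  have z0B: "z0 \<notin> B" using hB unfolding z0_def by auto
  have Bbd: "\<bar>real_of_int (b' ! i)\<bar> \<le> T" if "b' \<in> B" for b'
    using hB that i unfolding T_def Ni_def by auto
  have Bbd2: "- T \<le> real_of_int (b' ! i) \<and> real_of_int (b' ! i) \<le> T" if "b' \<in> B" for b'
    using Bbd[OF that] by linarith
  have Bv: "b' \<in> intvecs d" if "b' \<in> B" for b' using hB that by auto
  have countG: "real (card W) \<le> (hi - lo) / real_of_int a + 1"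
    if "finite W" "W \<subseteq> intvecs d" "\<forall>x1\<in>W. \<forall>x2\<in>W. affmap d M v x1 = affmap d M v x2"
       "\<forall>x\<in>W. lo \<le> real_of_int (x ! i) \<and> real_of_int (x ! i) \<le> hi" "lo \<le> hi" for W lo hi
  proof -
    have inj: "inj_on (\<lambda>x. x ! i) W"
      using that Pkey by (intro inj_onI) (meson subsetD)
    have "real (card ((\<lambda>x. x ! i) ` W)) \<le> (hi - lo) / real_of_int a + 1"
      using that apos Pkey by (intro cardA) (auto, meson subsetD)
    then show ?thesis using card_image[OF inj] by simp
  qed
  define Bp where "Bp = {b'\<in>B. linpart d M b' = replicate (d - 1) 0}"
  have F1: "real (card Bp) \<le> 2 * T / real_of_int a"
  proof -
    have fin: "finite (insert z0 Bp)" using finB unfolding Bp_def by simp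
    have "real (card (insert z0 Bp)) \<le> (T - (-T)) / real_of_int a + 1"
    proof (rule countG[OF fin])
      show "insert z0 Bp \<subseteq> intvecs d" using z0v Bv unfolding Bp_def by auto
      show "\<forall>x1\<in>insert z0 Bp. \<forall>x2\<in>insert z0 Bp. affmap d M v x1 = affmap d M v x2"
        unfolding aff_eq_iff Bp_def z0_def using linpart_zero by auto
      show "\<forall>x\<in>insert z0 Bp. - T \<le> real_of_int (x ! i) \<and> real_of_int (x ! i) \<le> T"
        using Bbd2 T0 i unfolding Bp_def z0_def by auto
      show "- T \<le> T" using T0 by simp
    qed
    moreover have "card (insert z0 Bp) = card Bp + 1"
      using z0B finB unfolding Bp_def by simp
    ultimately show ?thesis by simp
  qed
  have F2: "real (card {b'\<in>B. linpart d M b' = c}) \<le> 2 * T / real_of_int a + 1" for c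
  proof -
    have "real (card {b'\<in>B. linpart d M b' = c}) \<le> (T - (-T)) / real_of_int a + 1"
    proof (rule countG)
      show "finite {b'\<in>B. linpart d M b' = c}" using finB by simp
      show "{b'\<in>B. linpart d M b' = c} \<subseteq> intvecs d" using Bv by auto
      show "\<forall>x1\<in>{b'\<in>B. linpart d M b' = c}. \<forall>x2\<in>{b'\<in>B. linpart d M b' = c}. affmap d M v x1 = affmap d M v x2"
        unfolding aff_eq_iff by auto
      show "\<forall>x\<in>{b'\<in>B. linpart d M b' = c}. - T \<le> real_of_int (x ! i) \<and> real_of_int (x ! i) \<le> T"
        using Bbd2 by auto
      show "- T \<le> T" using T0 by simp
    qed
    then show ?thesis by simp
  qed
  define Ub where "Ub = U X b s"
  have UbX: "Ub \<subseteq> X" unfolding Ub_def U_def by auto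
  have Xv: "X \<subseteq> intvecs d" using hX by auto
  define K where "K = (real_of_int Ni - 1) / real_of_int a + 1"
  have finX: "finite X"
  proof -
    define Mx where "Mx = Max (set N)"
    have "X \<subseteq> {xs. set xs \<subseteq> {1..Mx} \<and> length xs = d}"
    proof
      fix x assume xX: "x \<in> X"
      have lx: "length x = d" using xX hX unfolding intvecs_def by auto
      have "set x \<subseteq> {1..Mx}"
      proof
        fix e assume "e \<in> set x"
        then obtain j where j: "j < d" "e = x ! j" using lx by (auto simp: in_set_conv_nth)
        have "N ! j \<le> Mx" unfolding Mx_def using j hN by (intro Max_ge) auto
        then show "e \<in> {1..Mx}" using hX xX j by force
      qed
      then show "x \<in> {xs. set xs \<subseteq> {1..Mx} \<and> length xs = d}" using lx by simp
    qed
    moreover have "finite {xs. set xs \<subseteq> {1..Mx} \<and> length xs = (d::nat)}"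
      by (rule finite_lists_length_eq) simp
    ultimately show ?thesis by (rule finite_subset)
  qed
  have F3: "\<forall>z. real (card {y\<in>Ub. affmap d M v y = z}) \<le> K"
  proof
    fix z
    show "real (card {y\<in>Ub. affmap d M v y = z}) \<le> K"
      unfolding K_def
    proof (rule countG)
      show "finite {y\<in>Ub. affmap d M v y = z}" using finite_subset[OF UbX finX] by simp
      show "{y\<in>Ub. affmap d M v y = z} \<subseteq> intvecs d" using UbX Xv by auto
      show "\<forall>x1\<in>{y\<in>Ub. affmap d M v y = z}. \<forall>x2\<in>{y\<in>Ub. affmap d M v y = z}. affmap d M v x1 = affmap d M v x2"
        by auto
      show "\<forall>x\<in>{y\<in>Ub. affmap d M v y = z}. 1 \<le> real_of_int (x ! i) \<and> real_of_int (x ! i) \<le> real_of_int Ni"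
        using UbX hX i unfolding Ni_def by force
      show "1 \<le> real_of_int Ni" using Nis hs by simp
    qed
  qed
  have s1r: "(1::nat) \<le> s" using hs by simp
  have F4: "real (card (Ub \<inter> U X b' s)) \<le> (real s' - 1) / real s * real (card (U X b' s))
      + K * real (card (U (affmap d M v ` Ub) (linpart d M b') s'))" if b'B: "b' \<in> B - Bp" for b'
  proof (rule F4gen[OF finX _ UbX _ _ F3 s1r hs'(1)])
    have lb': "length b' = d" using Bv b'B unfolding intvecs_def by auto
    show "\<forall>x\<in>X. length x = length b'" using Xv lb' unfolding intvecs_def by auto
    show "\<forall>y1\<in>X. \<forall>y2\<in>X. congr_mod b' y1 y2 \<longrightarrow>
            congr_mod (linpart d M b') (affmap d M v y1) (affmap d M v y2)"
      using Xv lb' lin_congr unfolding intvecs_def by blast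
    show "\<forall>y1\<in>X. \<forall>y2\<in>X. congr_mod b' y1 y2 \<and> affmap d M v y1 = affmap d M v y2 \<longrightarrow> y1 = y2"
    proof (intro ballI impI, elim conjE)
      fix y1 y2 assume y: "y1 \<in> X" "y2 \<in> X" "congr_mod b' y1 y2" "affmap d M v y1 = affmap d M v y2"
      have yv: "y1 \<in> intvecs d" "y2 \<in> intvecs d" using y Xv by auto
      obtain k :: int where k: "\<forall>j<d. y1 ! j - y2 ! j = k * b' ! j"
        using y(3) lb' unfolding congr_mod_def by auto
      obtain q :: rat where q: "\<forall>j<d. of_int (y1 ! j - y2 ! j) = q * of_int (b ! j)"
        using hf yv y(4) by blast
      show "y1 = y2"
      proof (cases "k = 0")
        case True
        then show ?thesis using k yv unfolding intvecs_def by (simp add: list_eq_iff_nth_eq)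
      next
        case False
        have "\<forall>j<d. of_int (b' ! j - z0 ! j) = (q / of_int k) * of_int (b ! j)"
        proof (intro allI impI)
          fix j assume j: "j < d"
          have "of_int k * of_int (b' ! j) = q * (of_int (b ! j) :: rat)"
            using k q j by (metis of_int_mult)
          then show "of_int (b' ! j - z0 ! j) = (q / of_int k) * (of_int (b ! j) :: rat)"
            using False j unfolding z0_def by (simp add: field_simps)
        qed
        then have "affmap d M v b' = affmap d M v z0" using hf Bv z0v b'B by blast
        then have "linpart d M b' = replicate (d - 1) 0" unfolding aff_eq_iff z0_def linpart_zero .
        then show ?thesis using b'B unfolding Bp_def by auto
      qed
    qed
  qed
  define Y where "Y = affmap d M v ` Ub"
  define Om where "Om = {c \<in> intvecs (d - 1). c \<noteq> replicate (d - 1) 0}"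
  define CS where "CS = linpart d M ` (B - Bp)"
  define S3 where "S3 = (\<Sum>c\<in>CS. real (card (U Y c s')))"
  define R where "R = 2 * T / real_of_int a + 1"
  define SB where "SB = (\<Sum>b'\<in>B. real (card (U X b' s)))"
  have finUb: "finite Ub" using finite_subset[OF UbX finX] .
  have finCS: "finite CS" unfolding CS_def using finB by simp
  have CSOm: "CS \<subseteq> Om"
  proof
    fix c assume "c \<in> CS"
    then obtain b' where "b' \<in> B - Bp" "c = linpart d M b'" unfolding CS_def by auto
    then show "c \<in> Om" unfolding Om_def Bp_def intvecs_def linpart_def by auto
  qed
  have BpB: "Bp \<subseteq> B" unfolding Bp_def by auto
  have split: "(\<Sum>b'\<in>B. real (card (Ub \<inter> U X b' s))) =
      (\<Sum>b'\<in>B - Bp. real (card (Ub \<inter> U X b' s))) + (\<Sum>b'\<in>Bp. real (card (Ub \<inter> U X b' s)))"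
    using sum.subset_diff[OF BpB finB] .
  have P1: "(\<Sum>b'\<in>Bp. real (card (Ub \<inter> U X b' s))) \<le> real (card Bp) * real (card Ub)"
  proof -
    have "(\<Sum>b'\<in>Bp. real (card (Ub \<inter> U X b' s))) \<le> (\<Sum>b'\<in>Bp. real (card Ub))"
      using finUb by (intro sum_mono) (simp add: card_mono)
    then show ?thesis by simp
  qed
  have P2: "(\<Sum>b'\<in>B - Bp. real (card (Ub \<inter> U X b' s))) \<le>
      (\<Sum>b'\<in>B - Bp. (real s' - 1) / real s * real (card (U X b' s)))
      + K * (\<Sum>b'\<in>B - Bp. real (card (U Y (linpart d M b') s')))"
  proof -
    have "(\<Sum>b'\<in>B - Bp. real (card (Ub \<inter> U X b' s))) \<le>
      (\<Sum>b'\<in>B - Bp. (real s' - 1) / real s * real (card (U X b' s))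
         + K * real (card (U Y (linpart d M b') s')))"
      using F4 unfolding Y_def by (intro sum_mono) auto
    then show ?thesis by (simp add: sum.distrib sum_distrib_left)
  qed
  have P3: "(\<Sum>b'\<in>B - Bp. (real s' - 1) / real s * real (card (U X b' s))) \<le> (real s' - 1) / real s * SB"
  proof -
    have "(\<Sum>b'\<in>B - Bp. real (card (U X b' s))) \<le> SB"
      unfolding SB_def using finB by (intro sum_mono2) auto
    moreover have "0 \<le> (real s' - 1) / real s" using hs' by simp
    ultimately have "(real s' - 1) / real s * (\<Sum>b'\<in>B - Bp. real (card (U X b' s))) \<le> (real s' - 1) / real s * SB"
      by (metis mult_left_mono)
    then show ?thesis by (simp only: sum_distrib_left)
  qed
  have P4: "(\<Sum>b'\<in>B - Bp. real (card (U Y (linpart d M b') s'))) \<le> R * S3"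
  proof -
    have fBB: "finite (B - Bp)" using finB by simp
    have "(\<Sum>b'\<in>B - Bp. real (card (U Y (linpart d M b') s'))) =
        (\<Sum>c\<in>CS. \<Sum>b'\<in>{x. x \<in> B - Bp \<and> linpart d M x = c}. real (card (U Y (linpart d M b') s')))"
      unfolding CS_def by (rule sum.image_gen[OF fBB])
    also have "\<dots> = (\<Sum>c\<in>CS. real (card {x. x \<in> B - Bp \<and> linpart d M x = c}) * real (card (U Y c s')))"
      by (intro sum.cong) auto
    also have "\<dots> \<le> (\<Sum>c\<in>CS. R * real (card (U Y c s')))"
    proof (rule sum_mono)
      fix c assume "c \<in> CS"
      have "card {x. x \<in> B - Bp \<and> linpart d M x = c} \<le> card {b'\<in>B. linpart d M b' = c}"
        using finB by (intro card_mono) auto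
      then have "real (card {x. x \<in> B - Bp \<and> linpart d M x = c}) \<le> R"
        using F2[of c] unfolding R_def by linarith
      then show "real (card {x. x \<in> B - Bp \<and> linpart d M x = c}) * real (card (U Y c s')) \<le> R * real (card (U Y c s'))"
        by (intro mult_right_mono) auto
    qed
    also have "\<dots> = R * S3" unfolding S3_def by (simp add: sum_distrib_left)
    finally show ?thesis .
  qed
  define sg where "sg = real s"
  define n where "n = real_of_int Ni"
  define al where "al = real_of_int a"
  define L where "L = 1 / lam0"
  define q where "q = L / (sg - 1)"
  have sg2: "sg \<ge> 2" unfolding sg_def using hs by simp
  have npos: "n > 0" unfolding n_def using Nipos .
  have alpos: "al > 0" unfolding al_def using apos by simp
  have alb: "lam0 * n \<le> al" unfolding al_def n_def using lamA .
  have Lpos: "L > 0" unfolding L_def using hlam by simp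
  have lamsg: "lam0 * (sg - 1) < 1" using hlam sg2 unfolding sg_def by (simp add: field_simps)
  have Lq: "L = (sg - 1) * q" unfolding q_def using sg2 by simp
  have q1: "q \<ge> 1"
  proof -
    have "1 / (lam0 * (sg - 1)) \<ge> 1" using lamsg hlam sg2 by (simp add: field_simps)
    then show ?thesis unfolding q_def L_def by (simp add: field_simps)
  qed
  have nal: "n / al \<le> L"
  proof -
    have "n / al \<le> n / (lam0 * n)" using alb npos hlam alpos by (intro divide_left_mono) auto
    also have "\<dots> = L" unfolding L_def using npos by simp
    finally show ?thesis .
  qed
  have Tal: "T / real_of_int a \<le> q"
  proof -
    have "T / real_of_int a = (n / al) / (sg - 1)" unfolding T_def n_def al_def sg_def by simp
    also have "\<dots> \<le> L / (sg - 1)" using nal sg2 by (intro divide_right_mono) auto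
    finally show ?thesis unfolding q_def .
  qed
  have L1: "L \<ge> 1"
  proof -
    have "1 * q \<le> (sg - 1) * q" using sg2 q1 by (intro mult_right_mono) auto
    then show ?thesis using Lq q1 by linarith
  qed
  have N1: "real (card Bp) \<le> 4 / (real s * lam0)"
  proof -
    have "real (card Bp) \<le> 2 * q" using F1 Tal by simp
    also have "2 * q \<le> 4 * L / sg"
    proof -
      have "0 \<le> q * (2 * sg - 4)" using sg2 q1 by (intro mult_nonneg_nonneg) auto
      moreover have "4 * L - 2 * q * sg = q * (2 * sg - 4)" unfolding Lq by (simp add: algebra_simps)
      ultimately have "2 * q * sg \<le> 4 * L" by linarith
      then show ?thesis using sg2 by (simp add: field_simps)
    qed
    also have "\<dots> = 4 / (real s * lam0)" unfolding L_def sg_def by simp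
    finally show ?thesis .
  qed
  have K0: "K \<ge> 0" and KL: "K \<le> 2 * L"
  proof -
    have "K \<le> n / al + 1" unfolding K_def n_def al_def using apos by (simp add: divide_right_mono)
    then show "K \<le> 2 * L" using nal L1 by linarith
    show "K \<ge> 0" unfolding K_def using Nis hs apos by simp
  qed
  have R0: "R \<ge> 0" and RL: "R \<le> 3 * q"
  proof -
    show "R \<le> 3 * q" unfolding R_def using Tal q1 by simp
    show "R \<ge> 0" unfolding R_def using T0 apos by simp
  qed
  have N2: "K * R \<le> 12 / (real s * lam0 ^ 2)"
  proof -
    have "K * R \<le> (2 * L) * (3 * q)" using KL RL K0 R0 by (intro mult_mono) auto
    also have "\<dots> \<le> 12 * L * L / sg"
    proof -
      have "0 \<le> (L * q) * (6 * sg - 12)" using sg2 q1 Lpos by (intro mult_nonneg_nonneg) auto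
      moreover have "12 * L * L - 6 * L * q * sg = (L * q) * (6 * sg - 12)"
        by (subst (2) Lq) (simp add: algebra_simps)
      ultimately have "6 * L * q * sg \<le> 12 * L * L" by linarith
      then show ?thesis using sg2 by (simp add: field_simps)
    qed
    also have "\<dots> = 12 / (real s * lam0 ^ 2)" unfolding L_def sg_def by (simp add: power2_eq_square)
    finally show ?thesis .
  qed
  have S30: "S3 \<ge> 0" unfolding S3_def by (simp add: sum_nonneg)
  have SB0: "SB \<ge> 0" unfolding SB_def by (simp add: sum_nonneg)
  have real_ineq: "(\<Sum>b'\<in>B. real (card (Ub \<inter> U X b' s))) \<le>
      4 / (real s * lam0) * real (card Ub) + (real s' - 1) / real s * SB + 12 / (real s * lam0 ^ 2) * S3"
  proof -
    have a1: "real (card Bp) * real (card Ub) \<le> 4 / (real s * lam0) * real (card Ub)"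
      using N1 by (intro mult_right_mono) auto
    have a2: "K * (R * S3) \<le> 12 / (real s * lam0 ^ 2) * S3"
    proof -
      have "(K * R) * S3 \<le> 12 / (real s * lam0 ^ 2) * S3" using N2 S30 by (metis mult_right_mono)
      then show ?thesis by (simp only: mult.assoc)
    qed
    have a3: "K * (\<Sum>b'\<in>B - Bp. real (card (U Y (linpart d M b') s'))) \<le> K * (R * S3)"
      using P4 K0 by (intro mult_left_mono) auto
    show ?thesis using split P1 P2 P3 a1 a2 a3 by linarith
  qed
  have c1: "0 \<le> 4 / (real s * lam0) * real (card Ub)" using hlam by simp
  have c2: "0 \<le> (real s' - 1) / real s * SB" using hs' SB0 by simp
  have c3: "0 \<le> 12 / (real s * lam0 ^ 2)" by simp
  have inf: "ennreal S3 \<le> infsum (\<lambda>c. ennreal (real (card (U Y c s')))) Om"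
  proof -
    have "ennreal S3 = (\<Sum>c\<in>CS. ennreal (real (card (U Y c s'))))" unfolding S3_def by simp
    also have "\<dots> = infsum (\<lambda>c. ennreal (real (card (U Y c s')))) CS" using finCS by simp
    also have "\<dots> \<le> infsum (\<lambda>c. ennreal (real (card (U Y c s')))) Om"
      using CSOm by (intro infsum_mono_neutral) (auto intro: nonneg_summable_on_complete)
    finally show ?thesis .
  qed
  have "ennreal (\<Sum>b'\<in>B. real (card (Ub \<inter> U X b' s))) \<le>
      ennreal (4 / (real s * lam0) * real (card Ub) + (real s' - 1) / real s * SB + 12 / (real s * lam0 ^ 2) * S3)"
    using real_ineq by (rule ennreal_leI)
  also have "\<dots> = ennreal (4 / (real s * lam0) * real (card Ub)) + ennreal ((real s' - 1) / real s * SB)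
      + ennreal (12 / (real s * lam0 ^ 2)) * ennreal S3"
  proof -
    have "0 \<le> 12 / (real s * lam0 ^ 2) * S3" using c3 S30 by (rule mult_nonneg_nonneg)
    then show ?thesis using c1 c2 c3 S30
      by (simp only: ennreal_plus add_nonneg_nonneg ennreal_mult[OF c3 S30])
  qed
  also have "\<dots> \<le> ennreal (4 / (real s * lam0) * real (card Ub)) + ennreal ((real s' - 1) / real s * SB)
      + ennreal (12 / (real s * lam0 ^ 2)) * infsum (\<lambda>c. ennreal (real (card (U Y c s')))) Om"
    using inf by (intro add_left_mono mult_left_mono) auto
  finally show ?thesis unfolding Ub_def SB_def Y_def Om_def .
qed

end
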